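(* Let $C$ be a cofibrant object of a P-category $(\mathcal{C},P,\mathcal{F},\mathcal{W})$. Every weak equivalence $w:A\to B$ of $\mathcal{C}$ induces a bijection $w_*:[C,A]\to[C,B]$, $[f]\mapsto[wf]$, where $[C,X]=\mathcal{C}(C,X)/\simeq$.
   Context: Let $\mathcal{C}$ be a category with finite products and a final object $e$. A functorial path is a functor $P:\mathcal{C}\to\mathcal{C}$ with natural transformations $\iota:1\to P$, $\delta^0,\delta^1:P\to1$, $\delta^0\iota=\delta^1\iota=1$; a homotopy $h:f\simeq g$ between $f,g:A\to B$ is $h:A\to P(B)$ with $\delta^0_Bh=f$, $\delta^1_Bh=g$ (for $C$ cofibrant this is an equivalence relation on $\mathcal{C}(C,X)$). The path is equipped with a symmetry $\tau$ (natural automorphism of $P$, $\tau\tau=1$, $\tau\iota=\iota$, $\delta^k\tau=\delta^{1-k}$), a coproduct $c:P\to P^2$ ($c_{P(A)}c_A=P(c_A)c_A$, $\delta^1_{P(A)}c_A=P(\delta^1_A)c_A=1$, $c_A\iota_A=\iota_{P(A)}\iota_A$, $\delta^0_{P(A)}c_A=P(\delta^0_A)c_A=\iota_A\delta^0_A$), an interchange $\mu$ (natural automorphism of $P^2$, $\delta^k_{P(A)}\mu_A=P(\delta^k_A)$, $P(\delta^k_A)\mu_A=\delta^k_{P(A)}$) and a folding map $\nabla:P^2\to P$ ($\delta^k_A\nabla_A=\delta^k_A\delta^k_{P(A)}$, $\nabla_A\iota_{P(A)}=1$). A P-category has classes $\mathcal{F}$ (fibrations), $\mathcal{W}$ (weak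 equivalences) with: (P$_1$) both contain isomorphisms and are closed under composition, $\mathcal{W}$ satisfies 2-out-of-3, each $A\to e$ is a fibration; (P$_2$) $\iota_A\in\mathcal{W}$, $(\delta^0_A,\delta^1_A)$ is a fibration, $\delta^0_A,\delta^1_A$ are trivial fibrations; (P$_3$) pullbacks along fibrations exist, the pulled-back map is a (trivial) fibration if the original is, and the other projection is a weak equivalence if the map pulled back along is; (P$_4$) $P$ preserves fibrations, weak equivalences and fibre products; (P$_5$) for each fibration $v:A\to B$ the map $((\delta^0_A,\delta^1_A),P(v)):P(A)\to(A\times A)\times_{B\times B}P(B)$ is a fibration. An object $C$ is cofibrant if for every trivial fibration $w:A\to B$ and every $f:C\to B$ there is $g:C\to A$ with $wg=f$. *)

theory Defs
  imports Main
begin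

text \<open>Objects have type 'o, arrows type 'a.
  cmp K g f denotes the composite g f (first f, then g).\<close>

record ('o, 'a) pcat =
  ob  :: "'o set"
  ar  :: "'a set"
  src :: "'a \<Rightarrow> 'o"
  tgt :: "'a \<Rightarrow> 'o"
  cmp :: "'a \<Rightarrow> 'a \<Rightarrow> 'a"
  idt :: "'o \<Rightarrow> 'a"
  prd :: "'o \<Rightarrow> 'o \<Rightarrow> 'o"
  pr1 :: "'o \<Rightarrow> 'o \<Rightarrow> 'a"
  pr2 :: "'o \<Rightarrow> 'o \<Rightarrow> 'a"
  tup :: "'a \<Rightarrow> 'a \<Rightarrow> 'a"
  fin :: "'o"
  trm :: "'o \<Rightarrow> 'a"
  Po  :: "'o \<Rightarrow> 'o"
  Pa  :: "'a \<Rightarrow> 'a"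
  iota :: "'o \<Rightarrow> 'a"
  d0  :: "'o \<Rightarrow> 'a"
  d1  :: "'o \<Rightarrow> 'a"
  tau :: "'o \<Rightarrow> 'a"
  cop :: "'o \<Rightarrow> 'a"
  mu  :: "'o \<Rightarrow> 'a"
  nab :: "'o \<Rightarrow> 'a"
  fib :: "'a set"
  weq :: "'a set"

definition hom :: "('o,'a) pcat \<Rightarrow> 'o \<Rightarrow> 'o \<Rightarrow> 'a set" where
  "hom K X Y = {f \<in> ar K. src K f = X \<and> tgt K f = Y}"

definition is_category :: "('o,'a) pcat \<Rightarrow> bool" where
  "is_category K \<longleftrightarrow>
     (\<forall>f\<in>ar K. src K f \<in> ob K \<and> tgt K f \<in> ob K)
   \<and> (\<forall>X\<in>ob K. idt K X \<in> hom K X X)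
   \<and> (\<forall>f\<in>ar K. \<forall>g\<in>ar K. tgt K f = src K g \<longrightarrow> cmp K g f \<in> hom K (src K f) (tgt K g))
   \<and> (\<forall>f\<in>ar K. cmp K (idt K (tgt K f)) f = f \<and> cmp K f (idt K (src K f)) = f)
   \<and> (\<forall>f\<in>ar K. \<forall>g\<in>ar K. \<forall>h\<in>ar K. tgt K f = src K g \<longrightarrow> tgt K g = src K h \<longrightarrow>
        cmp K h (cmp K g f) = cmp K (cmp K h g) f)"

definition is_iso :: "('o,'a) pcat \<Rightarrow> 'a \<Rightarrow> bool" where
  "is_iso K f \<longleftrightarrow> f \<in> ar K \<and> (\<exists>g\<in>hom K (tgt K f) (src K f).
      cmp K g f = idt K (src K f) \<and> cmp K f g = idt K (tgt K f))"

definition has_finite_products :: "('o,'a) pcat \<Rightarrow> bool" where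
  "has_finite_products K \<longleftrightarrow>
     fin K \<in> ob K
   \<and> (\<forall>X\<in>ob K. trm K X \<in> hom K X (fin K) \<and> (\<forall>f\<in>hom K X (fin K). f = trm K X))
   \<and> (\<forall>A\<in>ob K. \<forall>B\<in>ob K. prd K A B \<in> ob K \<and> pr1 K A B \<in> hom K (prd K A B) A
        \<and> pr2 K A B \<in> hom K (prd K A B) B)
   \<and> (\<forall>A\<in>ob K. \<forall>B\<in>ob K. \<forall>X\<in>ob K. \<forall>f\<in>hom K X A. \<forall>g\<in>hom K X B.
        tup K f g \<in> hom K X (prd K A B) \<and> cmp K (pr1 K A B) (tup K f g) = f
        \<and> cmp K (pr2 K A B) (tup K f g) = g)
   \<and> (\<forall>A\<in>ob K. \<forall>B\<in>ob K. \<forall>X\<in>ob K. \<forall>h\<in>hom K X (prd K A B).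
        h = tup K (cmp K (pr1 K A B) h) (cmp K (pr2 K A B) h))"

definition prod_ar :: "('o,'a) pcat \<Rightarrow> 'a \<Rightarrow> 'a \<Rightarrow> 'a" where
  "prod_ar K f g = tup K (cmp K f (pr1 K (src K f) (src K g))) (cmp K g (pr2 K (src K f) (src K g)))"

text \<open>is_pullback K v f p q: the square with p : Q \<rightarrow> src f (the map v pulled back
  along f) and q : Q \<rightarrow> src v (the other projection), v q = f p, is a pullback.\<close>
definition is_pullback :: "('o,'a) pcat \<Rightarrow> 'a \<Rightarrow> 'a \<Rightarrow> 'a \<Rightarrow> 'a \<Rightarrow> bool" where
  "is_pullback K v f p q \<longleftrightarrow>
     v \<in> ar K \<and> f \<in> ar K \<and> tgt K f = tgt K v
   \<and> p \<in> hom K (src K p) (src K f) \<and> q \<in> hom K (src K p) (src K v)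
   \<and> cmp K v q = cmp K f p
   \<and> (\<forall>Z\<in>ob K. \<forall>a\<in>hom K Z (src K f). \<forall>b\<in>hom K Z (src K v). cmp K f a = cmp K v b \<longrightarrow>
        (\<exists>!u. u \<in> hom K Z (src K p) \<and> cmp K p u = a \<and> cmp K q u = b))"

definition is_functor_P :: "('o,'a) pcat \<Rightarrow> bool" where
  "is_functor_P K \<longleftrightarrow>
     (\<forall>X\<in>ob K. Po K X \<in> ob K \<and> Pa K (idt K X) = idt K (Po K X))
   \<and> (\<forall>f\<in>ar K. Pa K f \<in> hom K (Po K (src K f)) (Po K (tgt K f)))
   \<and> (\<forall>f\<in>ar K. \<forall>g\<in>ar K. tgt K f = src K g \<longrightarrow> Pa K (cmp K g f) = cmp K (Pa K g) (Pa K f))"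

definition nat_trans :: "('o,'a) pcat \<Rightarrow> ('o \<Rightarrow> 'o) \<Rightarrow> ('a \<Rightarrow> 'a) \<Rightarrow> ('o \<Rightarrow> 'o) \<Rightarrow> ('a \<Rightarrow> 'a)
     \<Rightarrow> ('o \<Rightarrow> 'a) \<Rightarrow> bool" where
  "nat_trans K F Fa G Ga eta \<longleftrightarrow>
     (\<forall>X\<in>ob K. eta X \<in> hom K (F X) (G X))
   \<and> (\<forall>f\<in>ar K. cmp K (Ga f) (eta (src K f)) = cmp K (eta (tgt K f)) (Fa f))"

definition path_structure :: "('o,'a) pcat \<Rightarrow> bool" where
  "path_structure K \<longleftrightarrow>
     is_functor_P K
   \<comment> \<open>iota, delta^0, delta^1\<close>
   \<and> nat_trans K id id (Po K) (Pa K) (iota K)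
   \<and> nat_trans K (Po K) (Pa K) id id (d0 K)
   \<and> nat_trans K (Po K) (Pa K) id id (d1 K)
   \<and> (\<forall>A\<in>ob K. cmp K (d0 K A) (iota K A) = idt K A \<and> cmp K (d1 K A) (iota K A) = idt K A)
   \<comment> \<open>symmetry tau\<close>
   \<and> nat_trans K (Po K) (Pa K) (Po K) (Pa K) (tau K)
   \<and> (\<forall>A\<in>ob K. cmp K (tau K A) (tau K A) = idt K (Po K A)
        \<and> cmp K (tau K A) (iota K A) = iota K A
        \<and> cmp K (d0 K A) (tau K A) = d1 K A \<and> cmp K (d1 K A) (tau K A) = d0 K A)
   \<comment> \<open>coproduct c\<close>
   \<and> nat_trans K (Po K) (Pa K) (Po K \<circ> Po K) (Pa K \<circ> Pa K) (cop K)
   \<and> (\<forall>A\<in>ob K.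
        cmp K (cop K (Po K A)) (cop K A) = cmp K (Pa K (cop K A)) (cop K A)
      \<and> cmp K (d1 K (Po K A)) (cop K A) = idt K (Po K A)
      \<and> cmp K (Pa K (d1 K A)) (cop K A) = idt K (Po K A)
      \<and> cmp K (cop K A) (iota K A) = cmp K (iota K (Po K A)) (iota K A)
      \<and> cmp K (d0 K (Po K A)) (cop K A) = cmp K (iota K A) (d0 K A)
      \<and> cmp K (Pa K (d0 K A)) (cop K A) = cmp K (iota K A) (d0 K A))
   \<comment> \<open>interchange mu (natural automorphism of P^2)\<close>
   \<and> nat_trans K (Po K \<circ> Po K) (Pa K \<circ> Pa K) (Po K \<circ> Po K) (Pa K \<circ> Pa K) (mu K)
   \<and> (\<forall>A\<in>ob K. is_iso K (mu K A)
        \<and> cmp K (d0 K (Po K A)) (mu K A) = Pa K (d0 K A)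
        \<and> cmp K (d1 K (Po K A)) (mu K A) = Pa K (d1 K A)
        \<and> cmp K (Pa K (d0 K A)) (mu K A) = d0 K (Po K A)
        \<and> cmp K (Pa K (d1 K A)) (mu K A) = d1 K (Po K A))
   \<comment> \<open>folding map nabla\<close>
   \<and> nat_trans K (Po K \<circ> Po K) (Pa K \<circ> Pa K) (Po K) (Pa K) (nab K)
   \<and> (\<forall>A\<in>ob K.
        cmp K (d0 K A) (nab K A) = cmp K (d0 K A) (d0 K (Po K A))
      \<and> cmp K (d1 K A) (nab K A) = cmp K (d1 K A) (d1 K (Po K A))
      \<and> cmp K (nab K A) (iota K (Po K A)) = idt K (Po K A))"

definition P_axioms :: "('o,'a) pcat \<Rightarrow> bool" where
  "P_axioms K \<longleftrightarrow>
   \<comment> \<open>(P1)\<close>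
     fib K \<subseteq> ar K \<and> weq K \<subseteq> ar K
   \<and> (\<forall>f. is_iso K f \<longrightarrow> f \<in> fib K \<and> f \<in> weq K)
   \<and> (\<forall>f\<in>fib K. \<forall>g\<in>fib K. tgt K f = src K g \<longrightarrow> cmp K g f \<in> fib K)
   \<and> (\<forall>f\<in>ar K. \<forall>g\<in>ar K. tgt K f = src K g \<longrightarrow>
        ((f \<in> weq K \<and> g \<in> weq K \<longrightarrow> cmp K g f \<in> weq K)
       \<and> (f \<in> weq K \<and> cmp K g f \<in> weq K \<longrightarrow> g \<in> weq K)
       \<and> (g \<in> weq K \<and> cmp K g f \<in> weq K \<longrightarrow> f \<in> weq K)))
   \<and> (\<forall>A\<in>ob K. trm K A \<in> fib K)
   \<comment> \<open>(P2)\<close>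
   \<and> (\<forall>A\<in>ob K. iota K A \<in> weq K
        \<and> tup K (d0 K A) (d1 K A) \<in> fib K
        \<and> d0 K A \<in> fib K \<and> d0 K A \<in> weq K
        \<and> d1 K A \<in> fib K \<and> d1 K A \<in> weq K)
   \<comment> \<open>(P3)\<close>
   \<and> (\<forall>v\<in>fib K. \<forall>f\<in>ar K. tgt K f = tgt K v \<longrightarrow>
        (\<exists>p q. is_pullback K v f p q)
      \<and> (\<forall>p q. is_pullback K v f p q \<longrightarrow>
           p \<in> fib K \<and> (v \<in> weq K \<longrightarrow> p \<in> weq K) \<and> (f \<in> weq K \<longrightarrow> q \<in> weq K)))
   \<comment> \<open>(P4)\<close>
   \<and> (\<forall>v\<in>fib K. Pa K v \<in> fib K)
   \<and> (\<forall>w\<in>weq K. Pa K w \<in> weq K)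
   \<and> (\<forall>v\<in>fib K. \<forall>f p q. is_pullback K v f p q \<longrightarrow>
        is_pullback K (Pa K v) (Pa K f) (Pa K p) (Pa K q))
   \<comment> \<open>(P5)\<close>
   \<and> (\<forall>v\<in>fib K. \<forall>p q u.
        is_pullback K (tup K (d0 K (tgt K v)) (d1 K (tgt K v))) (prod_ar K v v) p q
      \<and> u \<in> hom K (Po K (src K v)) (src K p)
      \<and> cmp K p u = tup K (d0 K (src K v)) (d1 K (src K v))
      \<and> cmp K q u = Pa K v
      \<longrightarrow> u \<in> fib K)"

definition P_category :: "('o,'a) pcat \<Rightarrow> bool" where
  "P_category K \<longleftrightarrow> is_category K \<and> has_finite_products K \<and> path_structure K \<and> P_axioms K"

definition cofibrant :: "('o,'a) pcat \<Rightarrow> 'o \<Rightarrow> bool" where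
  "cofibrant K C \<longleftrightarrow> C \<in> ob K \<and>
     (\<forall>w A B f. w \<in> fib K \<and> w \<in> weq K \<and> w \<in> hom K A B \<and> f \<in> hom K C B \<longrightarrow>
        (\<exists>g\<in>hom K C A. cmp K w g = f))"

definition htpy_rel :: "('o,'a) pcat \<Rightarrow> 'o \<Rightarrow> 'o \<Rightarrow> ('a \<times> 'a) set" where
  "htpy_rel K C X = {(f, g). f \<in> hom K C X \<and> g \<in> hom K C X \<and>
     (\<exists>h\<in>hom K C (Po K X). cmp K (d0 K X) h = f \<and> cmp K (d1 K X) h = g)}"

definition htpy_classes :: "('o,'a) pcat \<Rightarrow> 'o \<Rightarrow> 'o \<Rightarrow> 'a set set" where
  "htpy_classes K C X = hom K C X // htpy_rel K C X"

end

theory Submission imports Defs begin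

locale PC =
  fixes K :: "('o,'a) pcat" (structure)
  assumes PC: "P_category K"
begin

abbreviation comp (infixr "\<cdot>" 55) where "g \<cdot> f \<equiv> cmp K g f"

lemma cat: "is_category K" and prods: "has_finite_products K" and path: "path_structure K"
  and ax: "P_axioms K"
  using PC unfolding P_category_def by auto

lemma homD: "f \<in> hom K X Y \<Longrightarrow> f \<in> ar K \<and> src K f = X \<and> tgt K f = Y"
  by (simp add: hom_def)

lemma homI: "f \<in> ar K \<Longrightarrow> f \<in> hom K (src K f) (tgt K f)"
  by (simp add: hom_def)

lemma hom_ob: "f \<in> hom K X Y \<Longrightarrow> X \<in> ob K \<and> Y \<in> ob K"
  using cat unfolding is_category_def hom_def by auto

lemma comp_hom: "f \<in> hom K X Y \<Longrightarrow> g \<in> hom K Y Z \<Longrightarrow> g \<cdot> f \<in> hom K X Z"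
  using cat unfolding is_category_def hom_def by auto

lemma assoc: "f \<in> hom K X Y \<Longrightarrow> g \<in> hom K Y Z \<Longrightarrow> h \<in> hom K Z W \<Longrightarrow>
   h \<cdot> (g \<cdot> f) = (h \<cdot> g) \<cdot> f"
  using cat unfolding is_category_def hom_def by auto

lemma id_hom: "X \<in> ob K \<Longrightarrow> idt K X \<in> hom K X X"
  using cat unfolding is_category_def by auto

lemma id_left: "f \<in> hom K X Y \<Longrightarrow> idt K Y \<cdot> f = f"
  using cat unfolding is_category_def hom_def by auto

lemma id_right: "f \<in> hom K X Y \<Longrightarrow> f \<cdot> idt K X = f"
  using cat unfolding is_category_def hom_def by auto

lemma fin_ob: "fin K \<in> ob K" using prods unfolding has_finite_products_def by auto
lemma trm_hom: "X \<in> ob K \<Longrightarrow> trm K X \<in> hom K X (fin K)"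
  using prods unfolding has_finite_products_def by auto
lemma trm_uniq: "f \<in> hom K X (fin K) \<Longrightarrow> f = trm K X"
  using prods hom_ob unfolding has_finite_products_def by blast
lemma prd_ob: "A \<in> ob K \<Longrightarrow> B \<in> ob K \<Longrightarrow> prd K A B \<in> ob K"
  using prods unfolding has_finite_products_def by auto
lemma pr1_hom: "A \<in> ob K \<Longrightarrow> B \<in> ob K \<Longrightarrow> pr1 K A B \<in> hom K (prd K A B) A"
  using prods unfolding has_finite_products_def by auto
lemma pr2_hom: "A \<in> ob K \<Longrightarrow> B \<in> ob K \<Longrightarrow> pr2 K A B \<in> hom K (prd K A B) B"
  using prods unfolding has_finite_products_def by auto
lemma tup_hom: "f \<in> hom K X A \<Longrightarrow> g \<in> hom K X B \<Longrightarrow> tup K f g \<in> hom K X (prd K A B)"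
  using prods hom_ob unfolding has_finite_products_def by blast
lemma pr1_tup: "f \<in> hom K X A \<Longrightarrow> g \<in> hom K X B \<Longrightarrow> pr1 K A B \<cdot> tup K f g = f"
  using prods hom_ob unfolding has_finite_products_def by blast
lemma pr2_tup: "f \<in> hom K X A \<Longrightarrow> g \<in> hom K X B \<Longrightarrow> pr2 K A B \<cdot> tup K f g = g"
  using prods hom_ob unfolding has_finite_products_def by blast
lemma tup_eta: "A \<in> ob K \<Longrightarrow> B \<in> ob K \<Longrightarrow> h \<in> hom K X (prd K A B) \<Longrightarrow>
    h = tup K (pr1 K A B \<cdot> h) (pr2 K A B \<cdot> h)"
  using prods hom_ob unfolding has_finite_products_def by blast

lemma tup_eqI: assumes "A \<in> ob K" "B \<in> ob K" "h \<in> hom K X (prd K A B)" "h' \<in> hom K X (prd K A B)"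
  "pr1 K A B \<cdot> h = pr1 K A B \<cdot> h'" "pr2 K A B \<cdot> h = pr2 K A B \<cdot> h'"
  shows "h = h'"
  using tup_eta[OF assms(1-3)] tup_eta[OF assms(1,2,4)] assms(5,6) by simp

lemma tup_comp: assumes "f \<in> hom K X A" "g \<in> hom K X B" "h \<in> hom K W X"
  shows "tup K f g \<cdot> h = tup K (f \<cdot> h) (g \<cdot> h)"
proof -
  have A: "A \<in> ob K" "B \<in> ob K" using assms hom_ob by auto
  have t: "tup K f g \<in> hom K X (prd K A B)" using tup_hom assms by auto
  have th: "tup K f g \<cdot> h \<in> hom K W (prd K A B)" using comp_hom[OF assms(3) t] .
  have "pr1 K A B \<cdot> (tup K f g \<cdot> h) = f \<cdot> h"
    using assoc[OF assms(3) t pr1_hom[OF A]] pr1_tup[OF assms(1,2)] by simp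
  moreover have "pr2 K A B \<cdot> (tup K f g \<cdot> h) = g \<cdot> h"
    using assoc[OF assms(3) t pr2_hom[OF A]] pr2_tup[OF assms(1,2)] by simp
  ultimately show ?thesis using tup_eta[OF A th] by simp
qed

lemma prod_ar_hom: assumes "f \<in> hom K X Y" "g \<in> hom K X' Y'"
  shows "prod_ar K f g \<in> hom K (prd K X X') (prd K Y Y')"
    and "pr1 K Y Y' \<cdot> prod_ar K f g = f \<cdot> pr1 K X X'"
    and "pr2 K Y Y' \<cdot> prod_ar K f g = g \<cdot> pr2 K X X'"
proof -
  have o: "X \<in> ob K" "X' \<in> ob K" using assms hom_ob by auto
  have s: "src K f = X" "src K g = X'" using assms homD by auto
  have a: "f \<cdot> pr1 K X X' \<in> hom K (prd K X X') Y" using comp_hom[OF pr1_hom[OF o] assms(1)] .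
  have b: "g \<cdot> pr2 K X X' \<in> hom K (prd K X X') Y'" using comp_hom[OF pr2_hom[OF o] assms(2)] .
  show "prod_ar K f g \<in> hom K (prd K X X') (prd K Y Y')"
    unfolding prod_ar_def s using tup_hom[OF a b] .
  show "pr1 K Y Y' \<cdot> prod_ar K f g = f \<cdot> pr1 K X X'"
    unfolding prod_ar_def s using pr1_tup[OF a b] .
  show "pr2 K Y Y' \<cdot> prod_ar K f g = g \<cdot> pr2 K X X'"
    unfolding prod_ar_def s using pr2_tup[OF a b] .
qed

lemma prod_ar_tup: assumes "f \<in> hom K X Y" "g \<in> hom K X' Y'" "x \<in> hom K W X" "y \<in> hom K W X'"
  shows "prod_ar K f g \<cdot> tup K x y = tup K (f \<cdot> x) (g \<cdot> y)"
proof -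
  have o: "X \<in> ob K" "X' \<in> ob K" using assms hom_ob by auto
  have s: "src K f = X" "src K g = X'" using assms homD by auto
  have a: "f \<cdot> pr1 K X X' \<in> hom K (prd K X X') Y" using comp_hom[OF pr1_hom[OF o] assms(1)] .
  have b: "g \<cdot> pr2 K X X' \<in> hom K (prd K X X') Y'" using comp_hom[OF pr2_hom[OF o] assms(2)] .
  have t: "tup K x y \<in> hom K W (prd K X X')" using tup_hom[OF assms(3,4)] .
  have "prod_ar K f g \<cdot> tup K x y = tup K ((f \<cdot> pr1 K X X') \<cdot> tup K x y) ((g \<cdot> pr2 K X X') \<cdot> tup K x y)"
    unfolding prod_ar_def s using tup_comp[OF a b t] .
  also have "(f \<cdot> pr1 K X X') \<cdot> tup K x y = f \<cdot> x"
    using assoc[OF t pr1_hom[OF o] assms(1)] pr1_tup[OF assms(3,4)] by simp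
  also have "(g \<cdot> pr2 K X X') \<cdot> tup K x y = g \<cdot> y"
    using assoc[OF t pr2_hom[OF o] assms(2)] pr2_tup[OF assms(3,4)] by simp
  finally show ?thesis .
qed

lemma prod_ar_comp: assumes "c \<in> hom K X Y" "a \<in> hom K Y Z" "d \<in> hom K X' Y'" "b \<in> hom K Y' Z'"
  shows "prod_ar K a b \<cdot> prod_ar K c d = prod_ar K (a \<cdot> c) (b \<cdot> d)"
proof -
  have o: "X \<in> ob K" "X' \<in> ob K" using assms hom_ob by auto
  have s: "src K c = X" "src K d = X'" "src K (a \<cdot> c) = X" "src K (b \<cdot> d) = X'"
    using assms homD comp_hom by blast+
  have x: "c \<cdot> pr1 K X X' \<in> hom K (prd K X X') Y" using comp_hom[OF pr1_hom[OF o] assms(1)] .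
  have y: "d \<cdot> pr2 K X X' \<in> hom K (prd K X X') Y'" using comp_hom[OF pr2_hom[OF o] assms(3)] .
  have "prod_ar K a b \<cdot> prod_ar K c d = tup K (a \<cdot> (c \<cdot> pr1 K X X')) (b \<cdot> (d \<cdot> pr2 K X X'))"
    using prod_ar_tup[OF assms(2,4) x y] unfolding prod_ar_def[of K c d] s by simp
  also have "\<dots> = prod_ar K (a \<cdot> c) (b \<cdot> d)"
    unfolding prod_ar_def s using assoc[OF pr1_hom[OF o] assms(1,2)] assoc[OF pr2_hom[OF o] assms(3,4)]
    by simp
  finally show ?thesis .
qed


lemma PF: "is_functor_P K" using path unfolding path_structure_def by (elim conjE) assumption
lemma nt_iota: "nat_trans K id id (Po K) (Pa K) (iota K)" using path unfolding path_structure_def by (elim conjE) assumption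
lemma nt_d0: "nat_trans K (Po K) (Pa K) id id (d0 K)" using path unfolding path_structure_def by (elim conjE) assumption
lemma nt_d1: "nat_trans K (Po K) (Pa K) id id (d1 K)" using path unfolding path_structure_def by (elim conjE) assumption
lemma nt_tau: "nat_trans K (Po K) (Pa K) (Po K) (Pa K) (tau K)" using path unfolding path_structure_def by (elim conjE) assumption
lemma nt_nab: "nat_trans K (Po K \<circ> Po K) (Pa K \<circ> Pa K) (Po K) (Pa K) (nab K)" using path unfolding path_structure_def by (elim conjE) assumption
lemma di: "\<forall>A\<in>ob K. cmp K (d0 K A) (iota K A) = idt K A \<and> cmp K (d1 K A) (iota K A) = idt K A"
   using path unfolding path_structure_def by (elim conjE) assumption
lemma taul: "\<forall>A\<in>ob K. cmp K (tau K A) (tau K A) = idt K (Po K A)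
        \<and> cmp K (tau K A) (iota K A) = iota K A
        \<and> cmp K (d0 K A) (tau K A) = d1 K A \<and> cmp K (d1 K A) (tau K A) = d0 K A"
   using path unfolding path_structure_def by (elim conjE) assumption
lemma nabl: "\<forall>A\<in>ob K.
        cmp K (d0 K A) (nab K A) = cmp K (d0 K A) (d0 K (Po K A))
      \<and> cmp K (d1 K A) (nab K A) = cmp K (d1 K A) (d1 K (Po K A))
      \<and> cmp K (nab K A) (iota K (Po K A)) = idt K (Po K A)"
   using path unfolding path_structure_def by (elim conjE) assumption

lemma Po_ob: "X \<in> ob K \<Longrightarrow> Po K X \<in> ob K"
  using PF unfolding is_functor_P_def by auto
lemma Pa_hom: "f \<in> hom K X Y \<Longrightarrow> Pa K f \<in> hom K (Po K X) (Po K Y)"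
  using PF homD unfolding is_functor_P_def by (metis (no_types, lifting))
lemma Pa_comp: "f \<in> hom K X Y \<Longrightarrow> g \<in> hom K Y Z \<Longrightarrow> Pa K (g \<cdot> f) = Pa K g \<cdot> Pa K f"
  using PF homD unfolding is_functor_P_def by (metis (no_types, lifting))

lemma iota_hom: "X \<in> ob K \<Longrightarrow> iota K X \<in> hom K X (Po K X)"
  using nt_iota unfolding nat_trans_def by auto
lemma d0_hom: "X \<in> ob K \<Longrightarrow> d0 K X \<in> hom K (Po K X) X"
  using nt_d0 unfolding nat_trans_def by auto
lemma d1_hom: "X \<in> ob K \<Longrightarrow> d1 K X \<in> hom K (Po K X) X"
  using nt_d1 unfolding nat_trans_def by auto
lemma tau_hom: "X \<in> ob K \<Longrightarrow> tau K X \<in> hom K (Po K X) (Po K X)"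
  using nt_tau unfolding nat_trans_def by auto
lemma nab_hom: "X \<in> ob K \<Longrightarrow> nab K X \<in> hom K (Po K (Po K X)) (Po K X)"
  using nt_nab unfolding nat_trans_def by auto

lemma d0_nat: assumes "f \<in> hom K X Y" shows "f \<cdot> d0 K X = d0 K Y \<cdot> Pa K f"
proof -
  have "\<forall>f\<in>ar K. cmp K (id f) (d0 K (src K f)) = cmp K (d0 K (tgt K f)) (Pa K f)"
    using nt_d0 unfolding nat_trans_def by blast
  then show ?thesis using assms homD by force
qed
lemma d1_nat: assumes "f \<in> hom K X Y" shows "f \<cdot> d1 K X = d1 K Y \<cdot> Pa K f"
proof -
  have "\<forall>f\<in>ar K. cmp K (id f) (d1 K (src K f)) = cmp K (d1 K (tgt K f)) (Pa K f)"
    using nt_d1 unfolding nat_trans_def by blast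
  then show ?thesis using assms homD by force
qed
lemma d0_iota: "X \<in> ob K \<Longrightarrow> d0 K X \<cdot> iota K X = idt K X" using di by blast
lemma d1_iota: "X \<in> ob K \<Longrightarrow> d1 K X \<cdot> iota K X = idt K X" using di by blast
lemma d0_tau: "X \<in> ob K \<Longrightarrow> d0 K X \<cdot> tau K X = d1 K X" using taul by blast
lemma d0_nab: "X \<in> ob K \<Longrightarrow> d0 K X \<cdot> nab K X = d0 K X \<cdot> d0 K (Po K X)" using nabl by blast
lemma d1_nab: "X \<in> ob K \<Longrightarrow> d1 K X \<cdot> nab K X = d1 K X \<cdot> d1 K (Po K X)" using nabl by blast

lemma ax1: "fib K \<subseteq> ar K" using ax unfolding P_axioms_def by (elim conjE) assumption
lemma ax2: "weq K \<subseteq> ar K" using ax unfolding P_axioms_def by (elim conjE) assumption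
lemma ax3: "\<forall>f\<in>fib K. \<forall>g\<in>fib K. tgt K f = src K g \<longrightarrow> cmp K g f \<in> fib K"
  using ax unfolding P_axioms_def by (elim conjE) assumption
lemma ax4: "\<forall>f\<in>ar K. \<forall>g\<in>ar K. tgt K f = src K g \<longrightarrow>
        ((f \<in> weq K \<and> g \<in> weq K \<longrightarrow> cmp K g f \<in> weq K)
       \<and> (f \<in> weq K \<and> cmp K g f \<in> weq K \<longrightarrow> g \<in> weq K)
       \<and> (g \<in> weq K \<and> cmp K g f \<in> weq K \<longrightarrow> f \<in> weq K))"
  using ax unfolding P_axioms_def by (elim conjE) assumption
lemma ax5: "\<forall>A\<in>ob K. trm K A \<in> fib K" using ax unfolding P_axioms_def by (elim conjE) assumption
lemma ax6: "\<forall>A\<in>ob K. iota K A \<in> weq K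
        \<and> tup K (d0 K A) (d1 K A) \<in> fib K
        \<and> d0 K A \<in> fib K \<and> d0 K A \<in> weq K
        \<and> d1 K A \<in> fib K \<and> d1 K A \<in> weq K"
  using ax unfolding P_axioms_def by (elim conjE) assumption
lemma ax7: "\<forall>v\<in>fib K. \<forall>f\<in>ar K. tgt K f = tgt K v \<longrightarrow>
        (\<exists>p q. is_pullback K v f p q)
      \<and> (\<forall>p q. is_pullback K v f p q \<longrightarrow>
           p \<in> fib K \<and> (v \<in> weq K \<longrightarrow> p \<in> weq K) \<and> (f \<in> weq K \<longrightarrow> q \<in> weq K))"
  using ax unfolding P_axioms_def by (elim conjE) assumption
lemma ax8: "\<forall>v\<in>fib K. Pa K v \<in> fib K" using ax unfolding P_axioms_def by (elim conjE) assumption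
lemma ax9: "\<forall>w\<in>weq K. Pa K w \<in> weq K" using ax unfolding P_axioms_def by (elim conjE) assumption
lemma ax10: "\<forall>v\<in>fib K. \<forall>p q u.
        is_pullback K (tup K (d0 K (tgt K v)) (d1 K (tgt K v))) (prod_ar K v v) p q
      \<and> u \<in> hom K (Po K (src K v)) (src K p)
      \<and> cmp K p u = tup K (d0 K (src K v)) (d1 K (src K v))
      \<and> cmp K q u = Pa K v
      \<longrightarrow> u \<in> fib K" using ax unfolding P_axioms_def by (elim conjE) assumption

lemma fib_ar: "f \<in> fib K \<Longrightarrow> f \<in> ar K" using ax1 by auto
lemma weq_ar: "f \<in> weq K \<Longrightarrow> f \<in> ar K" using ax2 by auto
lemma fib_comp: "f \<in> fib K \<Longrightarrow> g \<in> fib K \<Longrightarrow> f \<in> hom K X Y \<Longrightarrow> g \<in> hom K Y Z \<Longrightarrow> g \<cdot> f \<in> fib K"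
  using ax3 homD by metis
lemma weq_comp: "f \<in> weq K \<Longrightarrow> g \<in> weq K \<Longrightarrow> f \<in> hom K X Y \<Longrightarrow> g \<in> hom K Y Z \<Longrightarrow> g \<cdot> f \<in> weq K"
  using ax4 homD by metis
lemma weq_cancel: "g \<in> weq K \<Longrightarrow> g \<cdot> f \<in> weq K \<Longrightarrow> f \<in> hom K X Y \<Longrightarrow> g \<in> hom K Y Z \<Longrightarrow> f \<in> weq K"
  using ax4 homD by metis
lemma trm_fib: "A \<in> ob K \<Longrightarrow> trm K A \<in> fib K" using ax5 by auto
lemma d01_fib: "A \<in> ob K \<Longrightarrow> tup K (d0 K A) (d1 K A) \<in> fib K" using ax6 by auto
lemma d0_fib: "A \<in> ob K \<Longrightarrow> d0 K A \<in> fib K" using ax6 by auto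
lemma d0_weq: "A \<in> ob K \<Longrightarrow> d0 K A \<in> weq K" using ax6 by auto
lemma d1_fib: "A \<in> ob K \<Longrightarrow> d1 K A \<in> fib K" using ax6 by auto
lemma d1_weq: "A \<in> ob K \<Longrightarrow> d1 K A \<in> weq K" using ax6 by auto
lemma pb_ex: "v \<in> fib K \<Longrightarrow> f \<in> ar K \<Longrightarrow> tgt K f = tgt K v \<Longrightarrow> \<exists>p q. is_pullback K v f p q"
  using ax7 by blast
lemma pb_fib: "v \<in> fib K \<Longrightarrow> is_pullback K v f p q \<Longrightarrow> p \<in> fib K"
  using ax7 unfolding is_pullback_def by blast
lemma pb_tfib: "v \<in> fib K \<Longrightarrow> v \<in> weq K \<Longrightarrow> is_pullback K v f p q \<Longrightarrow> p \<in> weq K"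
  using ax7 unfolding is_pullback_def by blast
lemma pb_weq: "v \<in> fib K \<Longrightarrow> f \<in> weq K \<Longrightarrow> is_pullback K v f p q \<Longrightarrow> q \<in> weq K"
  using ax7 unfolding is_pullback_def by blast
lemma Pa_fib: "v \<in> fib K \<Longrightarrow> Pa K v \<in> fib K" using ax8 by blast
lemma Pa_weq: "v \<in> weq K \<Longrightarrow> Pa K v \<in> weq K" using ax9 by blast
lemma P5: "v \<in> fib K \<Longrightarrow>
        is_pullback K (tup K (d0 K (tgt K v)) (d1 K (tgt K v))) (prod_ar K v v) p q
      \<Longrightarrow> u \<in> hom K (Po K (src K v)) (src K p)
      \<Longrightarrow> cmp K p u = tup K (d0 K (src K v)) (d1 K (src K v))
      \<Longrightarrow> cmp K q u = Pa K v \<Longrightarrow> u \<in> fib K"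
  using ax10 by blast

lemma pbD: assumes "is_pullback K v f p q"
  shows "p \<in> hom K (src K p) (src K f)" "q \<in> hom K (src K p) (src K v)" "v \<cdot> q = f \<cdot> p"
    "f \<in> ar K" "v \<in> ar K" "tgt K f = tgt K v"
  using assms unfolding is_pullback_def by auto

lemma pb_univ: assumes "is_pullback K v f p q" "a \<in> hom K Z (src K f)" "b \<in> hom K Z (src K v)"
  "f \<cdot> a = v \<cdot> b"
  shows "\<exists>u\<in>hom K Z (src K p). p \<cdot> u = a \<and> q \<cdot> u = b"
  using assms hom_ob unfolding is_pullback_def by blast

lemma pbI: assumes "v \<in> hom K Y T" "f \<in> hom K X T" "p \<in> hom K Q X" "q \<in> hom K Q Y" "v \<cdot> q = f \<cdot> p"
  "\<And>Z a b. Z \<in> ob K \<Longrightarrow> a \<in> hom K Z X \<Longrightarrow> b \<in> hom K Z Y \<Longrightarrow> f \<cdot> a = v \<cdot> b \<Longrightarrow>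
     \<exists>u\<in>hom K Z Q. p \<cdot> u = a \<and> q \<cdot> u = b"
  "\<And>Z u u'. u \<in> hom K Z Q \<Longrightarrow> u' \<in> hom K Z Q \<Longrightarrow> p \<cdot> u = p \<cdot> u' \<Longrightarrow> q \<cdot> u = q \<cdot> u' \<Longrightarrow> u = u'"
  shows "is_pullback K v f p q"
proof -
  have s: "src K p = Q" "src K f = X" "src K v = Y" "tgt K f = T" "tgt K v = T"
    using assms homD by auto
  have u: "\<forall>Z\<in>ob K. \<forall>a\<in>hom K Z X. \<forall>b\<in>hom K Z Y. f \<cdot> a = v \<cdot> b \<longrightarrow>
        (\<exists>!u. u \<in> hom K Z Q \<and> p \<cdot> u = a \<and> q \<cdot> u = b)"
  proof (intro ballI impI)
    fix Z a b assume h: "Z \<in> ob K" "a \<in> hom K Z X" "b \<in> hom K Z Y" "f \<cdot> a = v \<cdot> b"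
    from assms(6)[OF h] obtain u where u: "u \<in> hom K Z Q" "p \<cdot> u = a" "q \<cdot> u = b" by blast
    show "\<exists>!u. u \<in> hom K Z Q \<and> p \<cdot> u = a \<and> q \<cdot> u = b"
    proof (rule ex1I[of _ u])
      show "u \<in> hom K Z Q \<and> p \<cdot> u = a \<and> q \<cdot> u = b" using u by simp
      fix u' assume "u' \<in> hom K Z Q \<and> p \<cdot> u' = a \<and> q \<cdot> u' = b"
      then show "u' = u" using assms(7)[of u' Z u] u by simp
    qed
  qed
  show ?thesis unfolding is_pullback_def s
    using assms(1-5) homD u by simp
qed


lemma prod_pb: assumes "X \<in> ob K" "Y \<in> ob K"
  shows "is_pullback K (trm K Y) (trm K X) (pr1 K X Y) (pr2 K X Y)"
proof (rule pbI[OF trm_hom[OF assms(2)] trm_hom[OF assms(1)] pr1_hom[OF assms] pr2_hom[OF assms]])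
  have P: "prd K X Y \<in> ob K" using prd_ob assms by auto
  show "trm K Y \<cdot> pr2 K X Y = trm K X \<cdot> pr1 K X Y"
    using trm_uniq comp_hom pr1_hom pr2_hom trm_hom assms by metis
next
  fix Z a b assume h: "Z \<in> ob K" "a \<in> hom K Z X" "b \<in> hom K Z Y"
  show "\<exists>u\<in>hom K Z (prd K X Y). pr1 K X Y \<cdot> u = a \<and> pr2 K X Y \<cdot> u = b"
    using tup_hom[OF h(2,3)] pr1_tup[OF h(2,3)] pr2_tup[OF h(2,3)] by blast
next
  fix Z u u' assume "u \<in> hom K Z (prd K X Y)" "u' \<in> hom K Z (prd K X Y)"
    "pr1 K X Y \<cdot> u = pr1 K X Y \<cdot> u'" "pr2 K X Y \<cdot> u = pr2 K X Y \<cdot> u'"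
  then show "u = u'" using tup_eqI assms by blast
qed

lemma pr1_fib: "X \<in> ob K \<Longrightarrow> Y \<in> ob K \<Longrightarrow> pr1 K X Y \<in> fib K"
  using pb_fib[OF trm_fib prod_pb] by blast

lemma prod_pb': assumes "X \<in> ob K" "Y \<in> ob K"
  shows "is_pullback K (trm K X) (trm K Y) (pr2 K X Y) (pr1 K X Y)"
proof (rule pbI[OF trm_hom[OF assms(1)] trm_hom[OF assms(2)] pr2_hom[OF assms] pr1_hom[OF assms]])
  show "trm K X \<cdot> pr1 K X Y = trm K Y \<cdot> pr2 K X Y"
    using trm_uniq comp_hom pr1_hom pr2_hom trm_hom assms by metis
next
  fix Z a b assume h: "Z \<in> ob K" "a \<in> hom K Z Y" "b \<in> hom K Z X"
  show "\<exists>u\<in>hom K Z (prd K X Y). pr2 K X Y \<cdot> u = a \<and> pr1 K X Y \<cdot> u = b"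
    using tup_hom[OF h(3,2)] pr1_tup[OF h(3,2)] pr2_tup[OF h(3,2)] by blast
next
  fix Z u u' assume "u \<in> hom K Z (prd K X Y)" "u' \<in> hom K Z (prd K X Y)"
    "pr2 K X Y \<cdot> u = pr2 K X Y \<cdot> u'" "pr1 K X Y \<cdot> u = pr1 K X Y \<cdot> u'"
  then show "u = u'" using tup_eqI assms by blast
qed

lemma pr2_fib: "X \<in> ob K \<Longrightarrow> Y \<in> ob K \<Longrightarrow> pr2 K X Y \<in> fib K"
  using pb_fib[OF trm_fib prod_pb'] by blast

lemma id_prod_weq: assumes u: "u \<in> hom K Y Y'" "u \<in> weq K" and Z: "Z \<in> ob K"
  shows "prod_ar K (idt K Z) u \<in> weq K"
proof -
  have o: "Y \<in> ob K" "Y' \<in> ob K" using u hom_ob by auto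
  have iZ: "idt K Z \<in> hom K Z Z" using id_hom Z by auto
  note pa = prod_ar_hom[OF iZ u(1)]
  have pb: "is_pullback K (pr2 K Z Y') u (pr2 K Z Y) (prod_ar K (idt K Z) u)"
  proof (rule pbI[OF pr2_hom[OF Z o(2)] u(1) pr2_hom[OF Z o(1)] pa(1)])
    show "pr2 K Z Y' \<cdot> prod_ar K (idt K Z) u = u \<cdot> pr2 K Z Y" using pa(3) .
  next
    fix W a b assume h: "W \<in> ob K" "a \<in> hom K W Y" "b \<in> hom K W (prd K Z Y')" "u \<cdot> a = pr2 K Z Y' \<cdot> b"
    have b1: "pr1 K Z Y' \<cdot> b \<in> hom K W Z" using comp_hom[OF h(3) pr1_hom[OF Z o(2)]] .
    have b2: "pr2 K Z Y' \<cdot> b \<in> hom K W Y'" using comp_hom[OF h(3) pr2_hom[OF Z o(2)]] .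
    have "prod_ar K (idt K Z) u \<cdot> tup K (pr1 K Z Y' \<cdot> b) a = tup K (idt K Z \<cdot> (pr1 K Z Y' \<cdot> b)) (u \<cdot> a)"
      using prod_ar_tup[OF iZ u(1) b1 h(2)] .
    also have "\<dots> = b" using id_left[OF b1] h(4) tup_eta[OF Z o(2) h(3)] by simp
    finally show "\<exists>uu\<in>hom K W (prd K Z Y). pr2 K Z Y \<cdot> uu = a \<and> prod_ar K (idt K Z) u \<cdot> uu = b"
      using tup_hom[OF b1 h(2)] pr2_tup[OF b1 h(2)] by blast
  next
    fix W uu uu' assume h: "uu \<in> hom K W (prd K Z Y)" "uu' \<in> hom K W (prd K Z Y)"
      "pr2 K Z Y \<cdot> uu = pr2 K Z Y \<cdot> uu'" "prod_ar K (idt K Z) u \<cdot> uu = prod_ar K (idt K Z) u \<cdot> uu'"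
    have e: "pr1 K Z Y \<cdot> x = pr1 K Z Y' \<cdot> (prod_ar K (idt K Z) u \<cdot> x)" if "x \<in> hom K W (prd K Z Y)" for x
      using assoc[OF that pa(1) pr1_hom[OF Z o(2)]] pa(2) id_left[OF pr1_hom[OF Z o(1)]] by simp
    have "pr1 K Z Y \<cdot> uu = pr1 K Z Y \<cdot> uu'" using e[OF h(1)] e[OF h(2)] h(4) by simp
    then show "uu = uu'" using tup_eqI[OF Z o(1) h(1,2)] h(3) by blast
  qed
  show ?thesis using pb_weq[OF pr2_fib[OF Z o(2)] u(2) pb] .
qed

lemma prod_id_weq: assumes u: "u \<in> hom K Y Y'" "u \<in> weq K" and Z: "Z \<in> ob K"
  shows "prod_ar K u (idt K Z) \<in> weq K"
proof -
  have o: "Y \<in> ob K" "Y' \<in> ob K" using u hom_ob by auto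
  have iZ: "idt K Z \<in> hom K Z Z" using id_hom Z by auto
  note pa = prod_ar_hom[OF u(1) iZ]
  have pb: "is_pullback K (pr1 K Y' Z) u (pr1 K Y Z) (prod_ar K u (idt K Z))"
  proof (rule pbI[OF pr1_hom[OF o(2) Z] u(1) pr1_hom[OF o(1) Z] pa(1)])
    show "pr1 K Y' Z \<cdot> prod_ar K u (idt K Z) = u \<cdot> pr1 K Y Z" using pa(2) .
  next
    fix W a b assume h: "W \<in> ob K" "a \<in> hom K W Y" "b \<in> hom K W (prd K Y' Z)" "u \<cdot> a = pr1 K Y' Z \<cdot> b"
    have b2: "pr2 K Y' Z \<cdot> b \<in> hom K W Z" using comp_hom[OF h(3) pr2_hom[OF o(2) Z]] .
    have "prod_ar K u (idt K Z) \<cdot> tup K a (pr2 K Y' Z \<cdot> b) = tup K (u \<cdot> a) (idt K Z \<cdot> (pr2 K Y' Z \<cdot> b))"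
      using prod_ar_tup[OF u(1) iZ h(2) b2] .
    also have "\<dots> = b" using id_left[OF b2] h(4) tup_eta[OF o(2) Z h(3)] by simp
    finally show "\<exists>uu\<in>hom K W (prd K Y Z). pr1 K Y Z \<cdot> uu = a \<and> prod_ar K u (idt K Z) \<cdot> uu = b"
      using tup_hom[OF h(2) b2] pr1_tup[OF h(2) b2] by blast
  next
    fix W uu uu' assume h: "uu \<in> hom K W (prd K Y Z)" "uu' \<in> hom K W (prd K Y Z)"
      "pr1 K Y Z \<cdot> uu = pr1 K Y Z \<cdot> uu'" "prod_ar K u (idt K Z) \<cdot> uu = prod_ar K u (idt K Z) \<cdot> uu'"
    have e: "pr2 K Y Z \<cdot> x = pr2 K Y' Z \<cdot> (prod_ar K u (idt K Z) \<cdot> x)" if "x \<in> hom K W (prd K Y Z)" for x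
      using assoc[OF that pa(1) pr2_hom[OF o(2) Z]] pa(3) id_left[OF pr2_hom[OF o(1) Z]] by simp
    have "pr2 K Y Z \<cdot> uu = pr2 K Y Z \<cdot> uu'" using e[OF h(1)] e[OF h(2)] h(4) by simp
    then show "uu = uu'" using tup_eqI[OF o(1) Z h(1,2)] h(3) by blast
  qed
  show ?thesis using pb_weq[OF pr1_fib[OF o(2) Z] u(2) pb] .
qed

lemma prod_weq: assumes "t \<in> hom K E B" "t \<in> weq K"
  shows "prod_ar K t t \<in> weq K"
proof -
  have o: "E \<in> ob K" "B \<in> ob K" using assms hom_ob by auto
  have iE: "idt K E \<in> hom K E E" and iB: "idt K B \<in> hom K B B" using id_hom o by auto
  have "prod_ar K t (idt K B) \<cdot> prod_ar K (idt K E) t = prod_ar K (t \<cdot> idt K E) (idt K B \<cdot> t)"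
    using prod_ar_comp[OF iE assms(1) assms(1) iB] .
  also have "\<dots> = prod_ar K t t" using id_left[OF assms(1)] id_right[OF assms(1)] by simp
  finally have eq: "prod_ar K t (idt K B) \<cdot> prod_ar K (idt K E) t = prod_ar K t t" .
  have "prod_ar K t (idt K B) \<cdot> prod_ar K (idt K E) t \<in> weq K"
    using weq_comp[OF id_prod_weq[OF assms o(1)] prod_id_weq[OF assms o(2)]
        prod_ar_hom(1)[OF iE assms(1)] prod_ar_hom(1)[OF assms(1) iB]] .
  then show ?thesis using eq by simp
qed


lemma cof_lift: "cofibrant K C \<Longrightarrow> w \<in> fib K \<Longrightarrow> w \<in> weq K \<Longrightarrow> w \<in> hom K A B \<Longrightarrow> f \<in> hom K C B \<Longrightarrow>
   \<exists>g\<in>hom K C A. w \<cdot> g = f"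
  unfolding cofibrant_def by blast

lemma d01_hom: "X \<in> ob K \<Longrightarrow> tup K (d0 K X) (d1 K X) \<in> hom K (Po K X) (prd K X X)"
  using tup_hom d0_hom d1_hom by blast

lemma tlift: assumes C: "cofibrant K C" and t: "t \<in> fib K" "t \<in> weq K" "t \<in> hom K E B"
  and xy: "x \<in> hom K C E" "y \<in> hom K C E" and g: "\<gamma> \<in> hom K C (Po K B)"
  and g0: "d0 K B \<cdot> \<gamma> = t \<cdot> x" and g1: "d1 K B \<cdot> \<gamma> = t \<cdot> y"
  shows "\<exists>H\<in>hom K C (Po K E). d0 K E \<cdot> H = x \<and> d1 K E \<cdot> H = y \<and> Pa K t \<cdot> H = \<gamma>"
proof -
  have o: "E \<in> ob K" "B \<in> ob K" using t hom_ob by auto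
  have st: "src K t = E" "tgt K t = B" using t homD by auto
  let ?v = "tup K (d0 K B) (d1 K B)"
  let ?f = "prod_ar K t t"
  have vh: "?v \<in> hom K (Po K B) (prd K B B)" using d01_hom o by auto
  have fh: "?f \<in> hom K (prd K E E) (prd K B B)" using prod_ar_hom(1)[OF t(3) t(3)] .
  obtain p q where pb: "is_pullback K ?v ?f p q"
    using pb_ex[OF d01_fib[OF o(2)], of ?f] fh vh homD by metis
  note pD = pbD[OF pb]
  have sf: "src K ?f = prd K E E" "src K ?v = Po K B" using fh vh homD by auto
  define R where "R = src K p"
  have ph: "p \<in> hom K R (prd K E E)" and qh: "q \<in> hom K R (Po K B)" using pD sf R_def by auto
  have qw: "q \<in> weq K" using pb_weq[OF d01_fib[OF o(2)] prod_weq[OF t(3,2)] pb] .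
  have PE: "Po K E \<in> ob K" using Po_ob o by auto
  have a: "tup K (d0 K E) (d1 K E) \<in> hom K (Po K E) (prd K E E)" using d01_hom o by auto
  have Pt: "Pa K t \<in> hom K (Po K E) (Po K B)" using Pa_hom t by auto
  have "?f \<cdot> tup K (d0 K E) (d1 K E) = tup K (t \<cdot> d0 K E) (t \<cdot> d1 K E)"
    using prod_ar_tup[OF t(3) t(3) d0_hom[OF o(1)] d1_hom[OF o(1)]] .
  also have "\<dots> = tup K (d0 K B \<cdot> Pa K t) (d1 K B \<cdot> Pa K t)" using d0_nat[OF t(3)] d1_nat[OF t(3)] by simp
  also have "\<dots> = ?v \<cdot> Pa K t" using tup_comp[OF d0_hom[OF o(2)] d1_hom[OF o(2)] Pt] by simp
  finally have sq: "?f \<cdot> tup K (d0 K E) (d1 K E) = ?v \<cdot> Pa K t" .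
  obtain u where u: "u \<in> hom K (Po K E) R" "p \<cdot> u = tup K (d0 K E) (d1 K E)" "q \<cdot> u = Pa K t"
    using pb_univ[OF pb, of "tup K (d0 K E) (d1 K E)" "Po K E" "Pa K t"] a Pt sf sq R_def by auto
  have uf: "u \<in> fib K" using P5[OF t(1), of p q u] pb u st R_def by simp
  have uw: "u \<in> weq K" using weq_cancel[OF qw _ u(1) qh] u(3) Pa_weq[OF t(2)] by simp
  have txy: "tup K x y \<in> hom K C (prd K E E)" using tup_hom xy by auto
  have "?f \<cdot> tup K x y = tup K (t \<cdot> x) (t \<cdot> y)" using prod_ar_tup[OF t(3) t(3) xy] .
  also have "\<dots> = ?v \<cdot> \<gamma>" using tup_comp[OF d0_hom[OF o(2)] d1_hom[OF o(2)] g] g0 g1 by simp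
  finally have sq2: "?f \<cdot> tup K x y = ?v \<cdot> \<gamma>" .
  have Cob: "C \<in> ob K" using C unfolding cofibrant_def by auto
  obtain r where r: "r \<in> hom K C R" "p \<cdot> r = tup K x y" "q \<cdot> r = \<gamma>"
    using pb_univ[OF pb, of "tup K x y" C \<gamma>] txy g sf sq2 R_def by auto
  obtain H where H: "H \<in> hom K C (Po K E)" "u \<cdot> H = r" using cof_lift[OF C uf uw u(1) r(1)] by blast
  have pu: "p \<cdot> (u \<cdot> H) = tup K (d0 K E) (d1 K E) \<cdot> H" using assoc[OF H(1) u(1) ph] u(2) by simp
  have e: "tup K (d0 K E) (d1 K E) \<cdot> H = tup K x y" using pu H(2) r(2) by simp
  have "tup K (d0 K E \<cdot> H) (d1 K E \<cdot> H) = tup K x y"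
    using e tup_comp[OF d0_hom[OF o(1)] d1_hom[OF o(1)] H(1)] by simp
  then have "pr1 K E E \<cdot> tup K (d0 K E \<cdot> H) (d1 K E \<cdot> H) = x"
    "pr2 K E E \<cdot> tup K (d0 K E \<cdot> H) (d1 K E \<cdot> H) = y"
    using pr1_tup[OF xy] pr2_tup[OF xy] by simp_all
  then have "d0 K E \<cdot> H = x" "d1 K E \<cdot> H = y"
    using pr1_tup pr2_tup comp_hom[OF H(1) d0_hom[OF o(1)]] comp_hom[OF H(1) d1_hom[OF o(1)]] by metis+
  moreover have "Pa K t \<cdot> H = \<gamma>" using assoc[OF H(1) u(1) qh] u(3) H(2) r(3) by simp
  ultimately show ?thesis using H(1) by blast
qed


lemma relI: "f \<in> hom K C X \<Longrightarrow> g \<in> hom K C X \<Longrightarrow> h \<in> hom K C (Po K X) \<Longrightarrow>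
   d0 K X \<cdot> h = f \<Longrightarrow> d1 K X \<cdot> h = g \<Longrightarrow> (f, g) \<in> htpy_rel K C X"
  unfolding htpy_rel_def by blast

lemma relE: "(f, g) \<in> htpy_rel K C X \<Longrightarrow> (\<And>h. f \<in> hom K C X \<Longrightarrow> g \<in> hom K C X \<Longrightarrow> h \<in> hom K C (Po K X) \<Longrightarrow>
   d0 K X \<cdot> h = f \<Longrightarrow> d1 K X \<cdot> h = g \<Longrightarrow> P) \<Longrightarrow> P"
  unfolding htpy_rel_def by blast

lemma htpy_equiv: assumes C: "cofibrant K C" and X: "X \<in> ob K"
  shows "equiv (hom K C X) (htpy_rel K C X)"
proof (rule equivI)
  show "htpy_rel K C X \<subseteq> hom K C X \<times> hom K C X" unfolding htpy_rel_def by auto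
  show "refl_on (hom K C X) (htpy_rel K C X)" unfolding refl_on_def
  proof
    fix f assume f: "f \<in> hom K C X"
    have i: "iota K X \<in> hom K X (Po K X)" using iota_hom X .
    show "(f, f) \<in> htpy_rel K C X"
      by (rule relI[OF f f comp_hom[OF f i]])
         (use assoc[OF f i d0_hom[OF X]] assoc[OF f i d1_hom[OF X]] d0_iota[OF X] d1_iota[OF X] id_left[OF f] in simp_all)
  qed
  show "sym (htpy_rel K C X)" unfolding sym_def
  proof (intro allI impI)
    fix f g assume "(f, g) \<in> htpy_rel K C X"
    then obtain h where h: "f \<in> hom K C X" "g \<in> hom K C X" "h \<in> hom K C (Po K X)" "d0 K X \<cdot> h = f" "d1 K X \<cdot> h = g"
      by (rule relE)
    have tt: "tau K X \<in> hom K (Po K X) (Po K X)" using tau_hom X .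
    have d1t: "d1 K X \<cdot> tau K X = d0 K X" using taul X by blast
    show "(g, f) \<in> htpy_rel K C X"
      by (rule relI[OF h(2) h(1) comp_hom[OF h(3) tt]])
        (use assoc[OF h(3) tt d0_hom[OF X]] assoc[OF h(3) tt d1_hom[OF X]] d0_tau[OF X] d1t h in simp_all)
  qed
  show "trans (htpy_rel K C X)" unfolding trans_def
  proof (intro allI impI)
    fix f g l assume "(f, g) \<in> htpy_rel K C X" "(g, l) \<in> htpy_rel K C X"
    then obtain h k where h: "f \<in> hom K C X" "g \<in> hom K C X" "h \<in> hom K C (Po K X)" "d0 K X \<cdot> h = f" "d1 K X \<cdot> h = g"
      and k: "l \<in> hom K C X" "k \<in> hom K C (Po K X)" "d0 K X \<cdot> k = g" "d1 K X \<cdot> k = l"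
      by (metis relE)
    have PX: "Po K X \<in> ob K" using Po_ob X .
    have i: "iota K X \<in> hom K X (Po K X)" using iota_hom X .
    have il: "iota K X \<cdot> l \<in> hom K C (Po K X)" using comp_hom[OF k(1) i] .
    have il1: "d1 K X \<cdot> (iota K X \<cdot> l) = l" using assoc[OF k(1) i d1_hom[OF X]] d1_iota[OF X] id_left[OF k(1)] by simp
    obtain H where H: "H \<in> hom K C (Po K (Po K X))" "d0 K (Po K X) \<cdot> H = h" "d1 K (Po K X) \<cdot> H = iota K X \<cdot> l"
    proof -
      have g0: "d0 K X \<cdot> k = d1 K X \<cdot> h" using h(5) k(3) by simp
      have g1: "d1 K X \<cdot> k = d1 K X \<cdot> (iota K X \<cdot> l)" using il1 k(4) by simp
      show ?thesis using tlift[OF C d1_fib[OF X] d1_weq[OF X] d1_hom[OF X] h(3) il k(2) g0 g1] that by blast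
    qed
    have n: "nab K X \<in> hom K (Po K (Po K X)) (Po K X)" using nab_hom X .
    have "d0 K X \<cdot> (nab K X \<cdot> H) = f"
      using assoc[OF H(1) n d0_hom[OF X]] d0_nab[OF X] assoc[OF H(1) d0_hom[OF PX] d0_hom[OF X]] H(2) h(4) by simp
    moreover have "d1 K X \<cdot> (nab K X \<cdot> H) = l"
      using assoc[OF H(1) n d1_hom[OF X]] d1_nab[OF X] assoc[OF H(1) d1_hom[OF PX] d1_hom[OF X]] H(3) il1 by simp
    ultimately show "(f, l) \<in> htpy_rel K C X" using relI[OF h(1) k(1) comp_hom[OF H(1) n]] by blast
  qed
qed

lemma htpy_post: assumes "(f, g) \<in> htpy_rel K C A" "w \<in> hom K A B"
  shows "(w \<cdot> f, w \<cdot> g) \<in> htpy_rel K C B"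
proof -
  obtain h where h: "f \<in> hom K C A" "g \<in> hom K C A" "h \<in> hom K C (Po K A)" "d0 K A \<cdot> h = f" "d1 K A \<cdot> h = g"
    using assms(1) by (rule relE)
  have A: "A \<in> ob K" "B \<in> ob K" using assms(2) hom_ob by auto
  have Pw: "Pa K w \<in> hom K (Po K A) (Po K B)" using Pa_hom assms(2) .
  show ?thesis
    by (rule relI[OF comp_hom[OF h(1) assms(2)] comp_hom[OF h(2) assms(2)] comp_hom[OF h(3) Pw]])
     (use assoc[OF h(3) Pw d0_hom[OF A(2)]] assoc[OF h(3) Pw d1_hom[OF A(2)]] d0_nat[OF assms(2)] d1_nat[OF assms(2)]
       assoc[OF h(3) d0_hom[OF A(1)] assms(2)] assoc[OF h(3) d1_hom[OF A(1)] assms(2)] h in simp_all)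
qed


lemma weq_bij_parts: assumes C: "cofibrant K C" and w: "w \<in> weq K" "w \<in> hom K A B"
  shows "\<forall>g\<in>hom K C B. \<exists>a\<in>hom K C A. (w \<cdot> a, g) \<in> htpy_rel K C B"
    and "\<forall>f\<in>hom K C A. \<forall>f'\<in>hom K C A. (w \<cdot> f, w \<cdot> f') \<in> htpy_rel K C B \<longrightarrow> (f, f') \<in> htpy_rel K C A"
proof -
  have o: "A \<in> ob K" "B \<in> ob K" using w hom_ob by auto
  have Cob: "C \<in> ob K" using C unfolding cofibrant_def by auto
  have iB: "idt K B \<in> hom K B B" using id_hom o by auto
  let ?v = "tup K (d0 K B) (d1 K B)"
  let ?f = "prod_ar K (idt K B) w"
  have vh: "?v \<in> hom K (Po K B) (prd K B B)" using d01_hom o by auto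
  note fa = prod_ar_hom[OF iB w(2)]
  have fh: "?f \<in> hom K (prd K B A) (prd K B B)" using fa(1) .
  obtain p q where pb: "is_pullback K ?v ?f p q"
    using pb_ex[OF d01_fib[OF o(2)], of ?f] fh vh homD by metis
  note pD = pbD[OF pb]
  have sf: "src K ?f = prd K B A" "src K ?v = Po K B" using fh vh homD by auto
  define R where "R = src K p"
  have ph: "p \<in> hom K R (prd K B A)" and qh: "q \<in> hom K R (Po K B)" using pD sf R_def by auto
  have sq: "?v \<cdot> q = ?f \<cdot> p" using pD by simp
  have qw: "q \<in> weq K" using pb_weq[OF d01_fib[OF o(2)] id_prod_weq[OF w(2,1) o(2)] pb] .
  have pf: "p \<in> fib K" using pb_fib[OF d01_fib[OF o(2)] pb] .
  have p1: "pr1 K B A \<in> hom K (prd K B A) B" and p2: "pr2 K B A \<in> hom K (prd K B A) A"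
    using pr1_hom pr2_hom o by auto
  have p1': "pr1 K B B \<in> hom K (prd K B B) B" and p2': "pr2 K B B \<in> hom K (prd K B B) B"
    using pr1_hom pr2_hom o by auto
  define t where "t = pr1 K B A \<cdot> p"
  have th: "t \<in> hom K R B" using comp_hom[OF ph p1] t_def by simp
  have tf: "t \<in> fib K" using fib_comp[OF pf pr1_fib[OF o(2,1)] ph p1] t_def by simp
  have t_eq: "t = d0 K B \<cdot> q"
  proof -
    have "t = (pr1 K B B \<cdot> ?f) \<cdot> p" using fa(2) id_left[OF p1] t_def by simp
    also have "\<dots> = pr1 K B B \<cdot> (?f \<cdot> p)" using assoc[OF ph fh p1'] by simp
    also have "\<dots> = (pr1 K B B \<cdot> ?v) \<cdot> q" using sq assoc[OF qh vh p1'] by simp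
    also have "\<dots> = d0 K B \<cdot> q" using pr1_tup[OF d0_hom[OF o(2)] d1_hom[OF o(2)]] by simp
    finally show ?thesis .
  qed
  have tw: "t \<in> weq K" using weq_comp[OF qw d0_weq[OF o(2)] qh d0_hom[OF o(2)]] t_eq by simp
  have d1q: "d1 K B \<cdot> q = w \<cdot> (pr2 K B A \<cdot> p)"
  proof -
    have "d1 K B \<cdot> q = (pr2 K B B \<cdot> ?v) \<cdot> q" using pr2_tup[OF d0_hom[OF o(2)] d1_hom[OF o(2)]] by simp
    also have "\<dots> = pr2 K B B \<cdot> (?f \<cdot> p)" using sq assoc[OF qh vh p2'] by simp
    also have "\<dots> = (w \<cdot> pr2 K B A) \<cdot> p" using assoc[OF ph fh p2'] fa(3) by simp
    also have "\<dots> = w \<cdot> (pr2 K B A \<cdot> p)" using assoc[OF ph p2 w(2)] by simp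
    finally show ?thesis .
  qed
  show "\<forall>g\<in>hom K C B. \<exists>a\<in>hom K C A. (w \<cdot> a, g) \<in> htpy_rel K C B"
  proof
    fix g assume g: "g \<in> hom K C B"
    obtain e where e: "e \<in> hom K C R" "t \<cdot> e = g" using cof_lift[OF C tf tw th g] by blast
    define a where "a = (pr2 K B A \<cdot> p) \<cdot> e"
    have ah: "a \<in> hom K C A" using a_def comp_hom[OF e(1) comp_hom[OF ph p2]] by simp
    have qe: "q \<cdot> e \<in> hom K C (Po K B)" using comp_hom[OF e(1) qh] .
    have "d0 K B \<cdot> (q \<cdot> e) = g" using assoc[OF e(1) qh d0_hom[OF o(2)]] t_eq e(2) by simp
    moreover have "d1 K B \<cdot> (q \<cdot> e) = w \<cdot> a"
      using assoc[OF e(1) qh d1_hom[OF o(2)]] d1q a_def assoc[OF e(1) comp_hom[OF ph p2] w(2)] by simp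
    ultimately have "(g, w \<cdot> a) \<in> htpy_rel K C B" using relI[OF g comp_hom[OF ah w(2)] qe] by blast
    then have "(w \<cdot> a, g) \<in> htpy_rel K C B" using htpy_equiv[OF C o(2)] unfolding equiv_def sym_def by blast
    then show "\<exists>a\<in>hom K C A. (w \<cdot> a, g) \<in> htpy_rel K C B" using ah by blast
  qed
  show "\<forall>f\<in>hom K C A. \<forall>f'\<in>hom K C A. (w \<cdot> f, w \<cdot> f') \<in> htpy_rel K C B \<longrightarrow> (f, f') \<in> htpy_rel K C A"
  proof (intro ballI impI)
    fix f f' assume f: "f \<in> hom K C A" and f': "f' \<in> hom K C A" and r: "(w \<cdot> f, w \<cdot> f') \<in> htpy_rel K C B"
    have sec: "\<exists>e\<in>hom K C R. p \<cdot> e = tup K (w \<cdot> x) x \<and> q \<cdot> e = iota K B \<cdot> (w \<cdot> x)" if x: "x \<in> hom K C A" for x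
    proof -
      have wx: "w \<cdot> x \<in> hom K C B" using comp_hom[OF x w(2)] .
      have a: "tup K (w \<cdot> x) x \<in> hom K C (prd K B A)" using tup_hom[OF wx x] .
      have ib: "iota K B \<in> hom K B (Po K B)" using iota_hom o by auto
      have b: "iota K B \<cdot> (w \<cdot> x) \<in> hom K C (Po K B)" using comp_hom[OF wx ib] .
      have "?f \<cdot> tup K (w \<cdot> x) x = tup K (w \<cdot> x) (w \<cdot> x)"
        using prod_ar_tup[OF iB w(2) wx x] id_left[OF wx] by simp
      also have "\<dots> = ?v \<cdot> (iota K B \<cdot> (w \<cdot> x))"
        using tup_comp[OF d0_hom[OF o(2)] d1_hom[OF o(2)] b]
          assoc[OF wx ib d0_hom[OF o(2)]] assoc[OF wx ib d1_hom[OF o(2)]] d0_iota[OF o(2)] d1_iota[OF o(2)]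
          id_left[OF wx] by simp
      finally have "?f \<cdot> tup K (w \<cdot> x) x = ?v \<cdot> (iota K B \<cdot> (w \<cdot> x))" .
      then show ?thesis using pb_univ[OF pb, of "tup K (w \<cdot> x) x" C "iota K B \<cdot> (w \<cdot> x)"] a b sf R_def by auto
    qed
    obtain e where e: "e \<in> hom K C R" "p \<cdot> e = tup K (w \<cdot> f) f" using sec[OF f] by blast
    obtain e' where e': "e' \<in> hom K C R" "p \<cdot> e' = tup K (w \<cdot> f') f'" using sec[OF f'] by blast
    have te: "t \<cdot> x = w \<cdot> y" if "x \<in> hom K C R" "p \<cdot> x = tup K (w \<cdot> y) y" "y \<in> hom K C A" for x y
      using t_def assoc[OF that(1) ph p1] that(2) pr1_tup[OF comp_hom[OF that(3) w(2)] that(3)] by simp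
    obtain h where h: "h \<in> hom K C (Po K B)" "d0 K B \<cdot> h = w \<cdot> f" "d1 K B \<cdot> h = w \<cdot> f'"
      using r by (rule relE)
    obtain H where H: "H \<in> hom K C (Po K R)" "d0 K R \<cdot> H = e" "d1 K R \<cdot> H = e'"
      using tlift[OF C tf tw th e(1) e'(1) h(1)] h(2,3) te[OF e f] te[OF e' f'] by force
    define \<pi> where "\<pi> = pr2 K B A \<cdot> p"
    have pih: "\<pi> \<in> hom K R A" using \<pi>_def comp_hom[OF ph p2] by simp
    have Ro: "R \<in> ob K" using ph hom_ob by auto
    have Pp: "Pa K \<pi> \<in> hom K (Po K R) (Po K A)" using Pa_hom pih .
    have pe: "\<pi> \<cdot> x = y" if "x \<in> hom K C R" "p \<cdot> x = tup K (w \<cdot> y) y" "y \<in> hom K C A" for x y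
      using \<pi>_def assoc[OF that(1) ph p2] that(2) pr2_tup[OF comp_hom[OF that(3) w(2)] that(3)] by simp
    have "d0 K A \<cdot> (Pa K \<pi> \<cdot> H) = f"
      using assoc[OF H(1) Pp d0_hom[OF o(1)]] d0_nat[OF pih] assoc[OF H(1) d0_hom[OF Ro] pih] H(2) pe[OF e f] by simp
    moreover have "d1 K A \<cdot> (Pa K \<pi> \<cdot> H) = f'"
      using assoc[OF H(1) Pp d1_hom[OF o(1)]] d1_nat[OF pih] assoc[OF H(1) d1_hom[OF Ro] pih] H(3) pe[OF e' f'] by simp
    ultimately show "(f, f') \<in> htpy_rel K C A" using relI[OF f f' comp_hom[OF H(1) Pp]] by blast
  qed
qed

end

theorem proposition2p23:
  fixes K :: "('o, 'a) pcat" and C A B :: 'o and w :: 'a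
  assumes "P_category K"
    and "cofibrant K C"
    and "w \<in> weq K" and "w \<in> hom K A B"
  shows "\<exists>F. bij_betw F (htpy_classes K C A) (htpy_classes K C B)
           \<and> (\<forall>f\<in>hom K C A. F (htpy_rel K C A `` {f}) = htpy_rel K C B `` {cmp K w f})"
proof -
  interpret PC K using assms(1) by unfold_locales
  have o: "A \<in> ob K" "B \<in> ob K" using assms(4) hom_ob by auto
  let ?RA = "htpy_rel K C A" and ?RB = "htpy_rel K C B"
  have eA: "equiv (hom K C A) ?RA" using htpy_equiv[OF assms(2) o(1)] .
  have eB: "equiv (hom K C B) ?RB" using htpy_equiv[OF assms(2) o(2)] .
  note parts = weq_bij_parts[OF assms(2) assms(3) assms(4)]
  define F where "F S = ?RB `` {w \<cdot> (SOME f. f \<in> S)}" for S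
  have Fc: "F (?RA `` {f}) = ?RB `` {w \<cdot> f}" if f: "f \<in> hom K C A" for f
  proof -
    have "f \<in> ?RA `` {f}" using eA f unfolding equiv_def refl_on_def by blast
    then have "(SOME g. g \<in> ?RA `` {f}) \<in> ?RA `` {f}" by (rule someI)
    then have "(f, SOME g. g \<in> ?RA `` {f}) \<in> ?RA" by simp
    then have "(w \<cdot> f, w \<cdot> (SOME g. g \<in> ?RA `` {f})) \<in> ?RB" using htpy_post assms(4) by blast
    then have "?RB `` {w \<cdot> (SOME g. g \<in> ?RA `` {f})} = ?RB `` {w \<cdot> f}"
      using equiv_class_eq_iff[OF eB] by metis
    then show ?thesis unfolding F_def .
  qed
  have "bij_betw F (htpy_classes K C A) (htpy_classes K C B)"
    unfolding bij_betw_def htpy_classes_def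
  proof
    show "inj_on F (hom K C A // ?RA)"
    proof (rule inj_onI)
      fix S S' assume S: "S \<in> hom K C A // ?RA" and S': "S' \<in> hom K C A // ?RA" and eq: "F S = F S'"
      obtain f where f: "S = ?RA `` {f}" "f \<in> hom K C A" using S by (rule quotientE)
      obtain f' where f': "S' = ?RA `` {f'}" "f' \<in> hom K C A" using S' by (rule quotientE)
      have wf: "w \<cdot> f \<in> hom K C B" "w \<cdot> f' \<in> hom K C B" using comp_hom assms(4) f f' by blast+
      have "?RB `` {w \<cdot> f} = ?RB `` {w \<cdot> f'}" using eq Fc f f' by simp
      then have "(w \<cdot> f, w \<cdot> f') \<in> ?RB" using eq_equiv_class_iff[OF eB wf] by simp
      then have "(f, f') \<in> ?RA" using parts(2) f f' by blast
      then show "S = S'" using f f' equiv_class_eq_iff[OF eA] by metis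
    qed
    show "F ` (hom K C A // ?RA) = hom K C B // ?RB"
    proof
      show "F ` (hom K C A // ?RA) \<subseteq> hom K C B // ?RB"
      proof
        fix T assume "T \<in> F ` (hom K C A // ?RA)"
        then obtain S where S: "S \<in> hom K C A // ?RA" "T = F S" by blast
        obtain f where f: "S = ?RA `` {f}" "f \<in> hom K C A" using S(1) by (rule quotientE)
        show "T \<in> hom K C B // ?RB" using S(2) f Fc quotientI comp_hom assms(4) by metis
      qed
      show "hom K C B // ?RB \<subseteq> F ` (hom K C A // ?RA)"
      proof
        fix T assume "T \<in> hom K C B // ?RB"
        then obtain g where g: "T = ?RB `` {g}" "g \<in> hom K C B" by (rule quotientE)
        obtain a where a: "a \<in> hom K C A" "(w \<cdot> a, g) \<in> ?RB" using parts(1) g(2) by blast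
        have "T = F (?RA `` {a})" using Fc[OF a(1)] g(1) a(2) equiv_class_eq_iff[OF eB] by metis
        then show "T \<in> F ` (hom K C A // ?RA)" using quotientI[OF a(1)] by blast
      qed
    qed
  qed
  then show ?thesis using Fc by blast
qed

end
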